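(* Let $w \in \mathbb{R}^n$ with $w_j > 0$ for all $j$, and let $x \in \mathbb{R}^n$ with $x_j > 0$ for $2 \le j \le n$. Define $c_x : [x_1^-, \infty) \to \mathbb{R}$, $c_x(t) = \|x - \phi_t(x)\|^2$. Then: (i) $c_x$ is piecewise $C^\infty$ with break points $b_j = \frac{w_1}{w_j} x_j$ ($2\le j\le n$), it is continuously differentiable at these break points, each smooth piece is strongly convex, and $c_x$ is strongly convex on $[x_1^-,\infty)$ and attains its minimum. (ii) Let $t^* = \arg\min_{t \in [x_1^-,\infty)} c_x(t)$. Then the Euclidean projection of $x$ onto $\Omega_1$ is \[ \arg\min_{z \in \Omega_1} \|x - z\| = \begin{cases} \phi_{x_1^+}(x) & \text{if } t^* < x_1^+,\\ \phi_{t^*}(x) & \text{if } t^* \in [x_1^+, 1],\\ \phi_1(x) & \text{if } t^* > 1.\end{cases} \]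
   Context: $\|\cdot\|$ is the Euclidean norm on $\mathbb{R}^n$. $\Omega_1 := \{ z \in \mathbb{R}^n_+ : z_1 \le 1,\ w_1 z_j \le w_j z_1 \text{ for } 2 \le j \le n\}$. For $t \in \mathbb{R}$, $\phi_t : \mathbb{R}^n \to \mathbb{R}^n$ is defined by $\phi_t(x)_1 = t$, and for $j \ne 1$: $\phi_t(x)_j = \frac{w_j}{w_1} t$ if $\frac{w_1}{w_j} x_j \ge t$, and $\phi_t(x)_j = x_j$ otherwise. $x_1^+ := \min\{1, \max\{0, x_1\}\}$ and $x_1^- := \min\{0, x_1\}$. *)

theory Defs
  imports "HOL-Analysis.Analysis"
begin

text \<open>Vectors in R^n are modelled as real^'n; the distinguished first coordinate
  is an arbitrary index i1 of the finite index type.\<close>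

definition Omega1 :: "'n::finite \<Rightarrow> real^'n \<Rightarrow> (real^'n) set" where
  "Omega1 i1 w = {z. (\<forall>j. z$j \<ge> 0) \<and> z$i1 \<le> 1 \<and>
                    (\<forall>j. j \<noteq> i1 \<longrightarrow> w$i1 * z$j \<le> w$j * z$i1)}"

definition phi :: "'n::finite \<Rightarrow> real^'n \<Rightarrow> real \<Rightarrow> real^'n \<Rightarrow> real^'n" where
  "phi i1 w t x = (\<chi> j. if j = i1 then t
                         else if (w$i1 / w$j) * x$j \<ge> t then (w$j / w$i1) * t
                         else x$j)"

definition x1plus :: "'n::finite \<Rightarrow> real^'n \<Rightarrow> real" where
  "x1plus i1 x = min 1 (max 0 (x$i1))"

definition x1minus :: "'n::finite \<Rightarrow> real^'n \<Rightarrow> real" where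
  "x1minus i1 x = min 0 (x$i1)"

text \<open>The cost function c_x(t) = norm (x - phi_t(x))^2 (written for all real t;
  only its restriction to [x1minus, infinity) is used).\<close>
definition cost :: "'n::finite \<Rightarrow> real^'n \<Rightarrow> real^'n \<Rightarrow> real \<Rightarrow> real" where
  "cost i1 w x t = (norm (x - phi i1 w t x))^2"

definition smooth_on :: "real set \<Rightarrow> (real \<Rightarrow> real) \<Rightarrow> bool" where
  "smooth_on S f \<longleftrightarrow> (\<forall>k. \<forall>t\<in>S. ((deriv ^^ k) f) differentiable (at t))"

definition strongly_convex_on :: "real set \<Rightarrow> (real \<Rightarrow> real) \<Rightarrow> bool" where
  "strongly_convex_on S f \<longleftrightarrow> (\<exists>\<mu>>0. \<forall>x\<in>S. \<forall>y\<in>S. \<forall>\<theta>\<in>{0..1}.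
      f (\<theta> * x + (1 - \<theta>) * y) \<le> \<theta> * f x + (1 - \<theta>) * f y - \<mu> / 2 * \<theta> * (1 - \<theta>) * (x - y)^2)"

definition breakpoints :: "'n::finite \<Rightarrow> real^'n \<Rightarrow> real^'n \<Rightarrow> real set" where
  "breakpoints i1 w x = {(w$i1 / w$j) * x$j | j. j \<noteq> i1}"

end

theory Submission
  imports Defs
begin

definition bp :: "'n::finite \<Rightarrow> real^'n \<Rightarrow> real^'n \<Rightarrow> 'n \<Rightarrow> real" where
  "bp i1 w x j = (w$i1 / w$j) * x$j"
definition kk :: "'n::finite \<Rightarrow> real^'n \<Rightarrow> 'n \<Rightarrow> real" where
  "kk i1 w j = (w$j / w$i1)^2"
definition hh :: "real \<Rightarrow> real" where
  "hh u = (max u 0)^2"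

lemma normsq: "norm (v::real^'n)^2 = (\<Sum>j\<in>UNIV. (v$j)^2)"
  by (simp add: norm_vec_def L2_set_def sum_nonneg)

lemma cost_formula:
  assumes wpos: "\<forall>j. w$j > 0"
  shows "cost i1 w x t = (x$i1 - t)^2 + (\<Sum>j\<in>UNIV-{i1}. kk i1 w j * hh (bp i1 w x j - t))"
proof -
  have "cost i1 w x t = (\<Sum>j\<in>UNIV. ((x - phi i1 w t x)$j)^2)"
    unfolding cost_def normsq ..
  also have "\<dots> = ((x - phi i1 w t x)$i1)^2 + (\<Sum>j\<in>UNIV-{i1}. ((x - phi i1 w t x)$j)^2)"
    by (simp add: sum.remove)
  also have "(\<Sum>j\<in>UNIV-{i1}. ((x - phi i1 w t x)$j)^2) = (\<Sum>j\<in>UNIV-{i1}. kk i1 w j * hh (bp i1 w x j - t))"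
  proof (rule sum.cong)
    fix j assume "j \<in> UNIV - {i1}"
    hence j: "j \<noteq> i1" by auto
    have w1: "w$i1 > 0" and wj: "w$j > 0" using wpos by auto
    show "((x - phi i1 w t x)$j)^2 = kk i1 w j * hh (bp i1 w x j - t)"
    proof (cases "(w$i1 / w$j) * x$j \<ge> t")
      case True
      have m: "max ((w$i1 / w$j) * x$j - t) 0 = (w$i1 / w$j) * x$j - t" using True by simp
      have e: "x$j - w$j / w$i1 * t = (w$j / w$i1) * ((w$i1 / w$j) * x$j - t)"
        using w1 wj by (simp add: field_simps)
      show ?thesis using True j w1 wj unfolding phi_def kk_def hh_def bp_def
        by (simp add: m field_simps power2_eq_square)
    next
      case False
      then show ?thesis using j unfolding phi_def kk_def hh_def bp_def
        by (simp add: max_def)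
    qed
  qed simp
  finally show ?thesis by (simp add: phi_def)
qed

lemma hh_conv:
  assumes "0 \<le> \<theta>" "\<theta> \<le> 1"
  shows "hh (\<theta> * u + (1-\<theta>) * y) \<le> \<theta> * hh u + (1-\<theta>) * hh y"
proof -
  define U where "U = max u 0"
  define V where "V = max y 0"
  have U0: "U \<ge> 0" and V0: "V \<ge> 0" by (auto simp: U_def V_def)
  have a: "max (\<theta> * u + (1-\<theta>) * y) 0 \<le> \<theta> * U + (1-\<theta>) * V"
  proof -
    have "\<theta> * u \<le> \<theta> * U" using assms by (auto simp: U_def intro: mult_left_mono)
    moreover have "(1-\<theta>) * y \<le> (1-\<theta>) * V" using assms by (auto simp: V_def intro: mult_left_mono)
    moreover have "0 \<le> \<theta> * U + (1-\<theta>) * V" using assms U0 V0 by simp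
    ultimately show ?thesis by simp
  qed
  have "hh (\<theta> * u + (1-\<theta>) * y) \<le> (\<theta> * U + (1-\<theta>) * V)^2"
    unfolding hh_def by (rule power_mono[OF a]) simp
  also have "\<dots> = \<theta> * U^2 + (1-\<theta>) * V^2 - \<theta> * (1-\<theta>) * (U-V)^2"
    by (simp add: algebra_simps power2_eq_square)
  also have "\<dots> \<le> \<theta> * U^2 + (1-\<theta>) * V^2" using assms by simp
  finally show ?thesis by (simp add: hh_def U_def V_def)
qed

lemma hh_mono: "u \<le> v \<Longrightarrow> hh u \<le> hh v"
  unfolding hh_def by (rule power_mono) auto

lemma hh_nonneg: "hh u \<ge> 0" unfolding hh_def by simp

lemma kk_nonneg: "kk i1 w j \<ge> 0" unfolding kk_def by simp

lemma cost_strong: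
  assumes wpos: "\<forall>j. w$j > 0" and "0 \<le> \<theta>" "\<theta> \<le> 1"
  shows "cost i1 w x (\<theta> * a + (1-\<theta>) * c) \<le> \<theta> * cost i1 w x a + (1-\<theta>) * cost i1 w x c
          - 2/2 * \<theta> * (1-\<theta>) * (a-c)^2"
proof -
  have q: "(x$i1 - (\<theta> * a + (1-\<theta>) * c))^2 = \<theta> * (x$i1-a)^2 + (1-\<theta>) * (x$i1-c)^2 - \<theta> * (1-\<theta>) * (a-c)^2"
    by (simp add: algebra_simps power2_eq_square)
  have s: "(\<Sum>j\<in>UNIV-{i1}. kk i1 w j * hh (bp i1 w x j - (\<theta> * a + (1-\<theta>) * c)))
       \<le> (\<Sum>j\<in>UNIV-{i1}. \<theta> * (kk i1 w j * hh (bp i1 w x j - a)) + (1-\<theta>) * (kk i1 w j * hh (bp i1 w x j - c)))"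
  proof (rule sum_mono)
    fix j
    have "bp i1 w x j - (\<theta> * a + (1-\<theta>) * c) = \<theta> * (bp i1 w x j - a) + (1-\<theta>) * (bp i1 w x j - c)"
      by (simp add: algebra_simps)
    hence "hh (bp i1 w x j - (\<theta> * a + (1-\<theta>) * c)) \<le> \<theta> * hh (bp i1 w x j - a) + (1-\<theta>) * hh (bp i1 w x j - c)"
      using hh_conv[OF assms(2,3)] by simp
    from mult_left_mono[OF this kk_nonneg]
    show "kk i1 w j * hh (bp i1 w x j - (\<theta> * a + (1-\<theta>) * c)) \<le> \<theta> * (kk i1 w j * hh (bp i1 w x j - a)) + (1-\<theta>) * (kk i1 w j * hh (bp i1 w x j - c))"
      by (simp add: algebra_simps)
  qed
  have s2: "(\<Sum>j\<in>UNIV-{i1}. \<theta> * (kk i1 w j * hh (bp i1 w x j - a)) + (1-\<theta>) * (kk i1 w j * hh (bp i1 w x j - c)))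
     = \<theta> * (\<Sum>j\<in>UNIV-{i1}. kk i1 w j * hh (bp i1 w x j - a)) + (1-\<theta>) * (\<Sum>j\<in>UNIV-{i1}. kk i1 w j * hh (bp i1 w x j - c))"
    by (simp add: sum.distrib sum_distrib_left)
  show ?thesis
    unfolding cost_formula[OF wpos] using q s s2 by (simp add: algebra_simps)
qed

lemma hh_if: "hh = (\<lambda>u. if u \<in> {..0} then 0 else u^2)"
  by (auto simp: hh_def fun_eq_iff max_def)

lemma hh_deriv: "(hh has_real_derivative 2 * max u 0) (at u)"
proof -
  have "((\<lambda>u. if u \<in> {..0} then 0 else u^2) has_vector_derivative
     (if u \<in> {..0} then (\<lambda>_. 0) u else (\<lambda>u. 2 * u) u)) (at u within UNIV)"
  proof (rule has_vector_derivative_If_within_closures[where S="{..0}" and T="{0<..}"])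
    show "u \<in> {..0} \<union> {0<..}" by auto
    show "UNIV = {..0::real} \<union> {0<..}" by auto
    show "((\<lambda>u. 0::real) has_vector_derivative 0) (at u within {..0} \<union> (closure {..0} \<inter> closure {0<..}))"
      by (rule has_vector_derivative_const)
    show "((\<lambda>u. u^2) has_vector_derivative 2 * u) (at u within {0<..} \<union> (closure {..0} \<inter> closure {0<..}))"
      unfolding has_real_derivative_iff_has_vector_derivative[symmetric]
      by (rule has_field_derivative_at_within) (auto intro!: derivative_eq_intros)
  qed auto
  thus ?thesis
    unfolding hh_if has_real_derivative_iff_has_vector_derivative
    by (auto simp: max_def)
qed

lemma hh_deriv2: "((\<lambda>t. hh (b - t)) has_real_derivative - (2 * max (b - t) 0)) (at t)"
proof -
  have "((\<lambda>t. b - t) has_real_derivative -1) (at t)" by (auto intro!: derivative_eq_intros)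
  from DERIV_chain2[OF hh_deriv this] show ?thesis by simp
qed

definition Dc :: "'n::finite \<Rightarrow> real^'n \<Rightarrow> real^'n \<Rightarrow> real \<Rightarrow> real" where
  "Dc i1 w x t = -2 * (x$i1 - t) - (\<Sum>j\<in>UNIV-{i1}. kk i1 w j * (2 * max (bp i1 w x j - t) 0))"

lemma cost_fun:
  assumes wpos: "\<forall>j. w$j > 0"
  shows "cost i1 w x = (\<lambda>t. (x$i1 - t)^2 + (\<Sum>j\<in>UNIV-{i1}. kk i1 w j * hh (bp i1 w x j - t)))"
  using cost_formula[OF wpos] by auto

lemma cost_deriv:
  assumes wpos: "\<forall>j. w$j > 0"
  shows "(cost i1 w x has_real_derivative Dc i1 w x t) (at t)"
proof -
  have "((\<lambda>t. (x$i1 - t)^2 + (\<Sum>j\<in>UNIV-{i1}. kk i1 w j * hh (bp i1 w x j - t))) has_real_derivative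
      2 * (x$i1 - t) * (0 - 1) + (\<Sum>j\<in>UNIV-{i1}. kk i1 w j * (- (2 * max (bp i1 w x j - t) 0)))) (at t)"
    by (intro DERIV_add DERIV_sum DERIV_cmult hh_deriv2) (auto intro!: derivative_eq_intros)
  thus ?thesis unfolding cost_fun[OF wpos] Dc_def
    by (simp add: sum_negf)
qed

lemma Dc_cont: "isCont (Dc i1 w x) t"
  unfolding Dc_def by (intro continuous_intros)

lemma cost_cont: assumes wpos: "\<forall>j. w$j > 0" shows "continuous_on S (cost i1 w x)"
  using cost_deriv[OF wpos] DERIV_isCont continuous_at_imp_continuous_on by blast

lemma deriv_cost: assumes wpos: "\<forall>j. w$j > 0" shows "deriv (cost i1 w x) = Dc i1 w x"
  using cost_deriv[OF wpos] DERIV_imp_deriv by blast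

definition locquad :: "real set \<Rightarrow> (real \<Rightarrow> real) \<Rightarrow> bool" where
  "locquad S f \<longleftrightarrow> (\<exists>a b c. \<forall>s\<in>S. f s = a + b * s + c * s^2)"

lemma locquad_deriv:
  assumes "open S" "locquad S f"
  shows "locquad S (deriv f) \<and> (\<forall>s\<in>S. f differentiable (at s))"
proof -
  obtain a b c where abc: "\<forall>s\<in>S. f s = a + b * s + c * s^2" using assms(2) unfolding locquad_def by blast
  have d: "(f has_real_derivative b + 2 * c * s) (at s)" if "s \<in> S" for s
  proof (rule has_field_derivative_transform_within_open[OF _ assms(1) that])
    show "((\<lambda>s. a + b * s + c * s^2) has_real_derivative b + 2 * c * s) (at s)"
      by (auto intro!: derivative_eq_intros)
    show "\<And>y. y \<in> S \<Longrightarrow> a + b * y + c * y^2 = f y" using abc by simp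
  qed
  have "\<forall>s\<in>S. deriv f s = b + (2 * c) * s + 0 * s^2" using d DERIV_imp_deriv by fastforce
  hence "locquad S (deriv f)" unfolding locquad_def by blast
  moreover have "\<forall>s\<in>S. f differentiable (at s)"
    using d unfolding real_differentiable_def by blast
  ultimately show ?thesis by blast
qed

lemma locquad_iter:
  assumes "open S" "locquad S f"
  shows "locquad S ((deriv ^^ k) f)"
proof (induction k)
  case 0 thus ?case using assms by simp
next
  case (Suc k) thus ?case using locquad_deriv[OF assms(1)] by simp
qed

lemma locquad_smooth:
  assumes "open S" "locquad S f"
  shows "\<forall>t\<in>S. ((deriv ^^ k) f) differentiable (at t)"
  using locquad_deriv[OF assms(1) locquad_iter[OF assms]] by blast

lemma locquad_add: "locquad S f \<Longrightarrow> locquad S g \<Longrightarrow> locquad S (\<lambda>s. f s + g s)"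
  unfolding locquad_def
proof (elim exE)
  fix a b c a' b' c'
  assume "\<forall>s\<in>S. f s = a + b * s + c * s^2" "\<forall>s\<in>S. g s = a' + b' * s + c' * s^2"
  hence "\<forall>s\<in>S. f s + g s = (a+a') + (b+b') * s + (c+c') * s^2" by (simp add: algebra_simps)
  thus "\<exists>a b c. \<forall>s\<in>S. f s + g s = a + b * s + c * s^2" by blast
qed

lemma locquad_const: "locquad S (\<lambda>s. k)"
  unfolding locquad_def by (rule exI[of _ k], rule exI[of _ 0], rule exI[of _ 0]) simp

lemma locquad_sum:
  assumes "finite A" "\<And>j. j \<in> A \<Longrightarrow> locquad S (f j)"
  shows "locquad S (\<lambda>s. \<Sum>j\<in>A. f j s)"
  using assms
proof (induction A rule: finite_induct)
  case empty thus ?case using locquad_const[of S 0] by simp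
next
  case (insert j A)
  have "locquad S (\<lambda>s. f j s + (\<Sum>j\<in>A. f j s))"
    by (rule locquad_add) (use insert in auto)
  thus ?case using insert by simp
qed

lemma locquad_cong: "locquad S f \<Longrightarrow> (\<And>s. s \<in> S \<Longrightarrow> g s = f s) \<Longrightarrow> locquad S g"
  unfolding locquad_def by auto

lemma cost_locquad:
  assumes wpos: "\<forall>j. w$j > 0" and nb: "\<forall>j. j \<noteq> i1 \<longrightarrow> bp i1 w x j \<notin> ball t e" and e0: "e > 0"
  shows "locquad (ball t e) (cost i1 w x)"
proof -
  have l1: "locquad (ball t e) (\<lambda>s. (x$i1 - s)^2)"
    unfolding locquad_def
    by (rule exI[of _ "(x$i1)^2"], rule exI[of _ "-2 * x$i1"], rule exI[of _ 1])
       (simp add: algebra_simps power2_eq_square)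
  have l2: "locquad (ball t e) (\<lambda>s. kk i1 w j * hh (bp i1 w x j - s))" if j: "j \<in> UNIV - {i1}" for j
  proof -
    define B where "B = bp i1 w x j"
    have Bn: "B \<notin> ball t e" using nb j unfolding B_def by auto
    show ?thesis
    proof (cases "B > t")
      case True
      have h: "hh (B - s) = (B - s)^2" if "s \<in> ball t e" for s
      proof -
        have "B > s"
        proof (rule ccontr)
          assume "\<not> B > s"
          hence "dist t B \<le> dist t s" using True by (simp add: dist_real_def)
          hence "B \<in> ball t e" using that by auto
          thus False using Bn by simp
        qed
        thus ?thesis by (simp add: hh_def)
      qed
      have lq: "locquad (ball t e) (\<lambda>s. kk i1 w j * (B - s)^2)"
        unfolding locquad_def
        by (rule exI[of _ "kk i1 w j * B^2"], rule exI[of _ "-2 * kk i1 w j * B"], rule exI[of _ "kk i1 w j"])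
           (simp add: algebra_simps power2_eq_square)
      have "locquad (ball t e) (\<lambda>s. kk i1 w j * hh (B - s))"
        by (rule locquad_cong[OF lq]) (simp add: h)
      thus ?thesis unfolding B_def .
    next
      case False
      have "B \<noteq> t" using Bn e0 by auto
      hence Bt: "B < t" using False by simp
      have z: "hh (B - s) = 0" if "s \<in> ball t e" for s
      proof -
        have "B < s"
        proof (rule ccontr)
          assume "\<not> B < s"
          hence "dist t B \<le> dist t s" using Bt by (simp add: dist_real_def)
          hence "B \<in> ball t e" using that by auto
          thus False using Bn by simp
        qed
        thus ?thesis by (simp add: hh_def)
      qed
      have "locquad (ball t e) (\<lambda>s. kk i1 w j * hh (B - s))"
        by (rule locquad_cong[OF locquad_const[of _ 0]]) (simp add: z)
      thus ?thesis unfolding B_def .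
    qed
  qed
  show ?thesis unfolding cost_fun[OF wpos]
    by (rule locquad_add[OF l1 locquad_sum]) (auto intro: l2)
qed

lemma cost_sc: assumes wpos: "\<forall>j. w$j > 0" shows "strongly_convex_on S (cost i1 w x)"
  unfolding strongly_convex_on_def
  by (rule exI[of _ 2]) (use cost_strong[OF wpos] in auto)

lemma cost_conv:
  assumes wpos: "\<forall>j. w$j > 0" and "0 \<le> \<theta>" "\<theta> \<le> 1"
  shows "cost i1 w x (\<theta> * a + (1-\<theta>) * c) \<le> \<theta> * cost i1 w x a + (1-\<theta>) * cost i1 w x c"
proof -
  have "0 \<le> \<theta> * (1-\<theta>) * (a-c)^2" using assms by simp
  thus ?thesis using cost_strong[OF assms, of i1 x a c] by simp
qed

lemma cost_lower: assumes wpos: "\<forall>j. w$j > 0" shows "cost i1 w x t \<ge> (x$i1 - t)^2"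
  unfolding cost_formula[OF wpos]
  by (simp add: sum_nonneg kk_nonneg hh_nonneg)

lemma cost_mono_part:
  assumes wpos: "\<forall>j. w$j > 0" and "t \<le> s"
  shows "cost i1 w x t \<ge> cost i1 w x s + (x$i1 - t)^2 - (x$i1 - s)^2"
proof -
  have "(\<Sum>j\<in>UNIV-{i1}. kk i1 w j * hh (bp i1 w x j - s)) \<le> (\<Sum>j\<in>UNIV-{i1}. kk i1 w j * hh (bp i1 w x j - t))"
    by (rule sum_mono, rule mult_left_mono[OF hh_mono kk_nonneg]) (use assms in simp)
  thus ?thesis unfolding cost_formula[OF wpos] by simp
qed

lemma between1:
  assumes wpos: "\<forall>j. w$j > 0" and "a \<le> p" "p \<le> s" "cost i1 w x a \<le> cost i1 w x s"
  shows "cost i1 w x p \<le> cost i1 w x s"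
proof (cases "a = s")
  case True thus ?thesis using assms by simp
next
  case False
  hence as: "a < s" using assms by simp
  define \<theta> where "\<theta> = (p - a) / (s - a)"
  have t0: "0 \<le> \<theta>" "\<theta> \<le> 1" using assms as by (auto simp: \<theta>_def field_simps)
  have e: "\<theta> * (s - a) = p - a" using as by (simp add: \<theta>_def)
  have "p = \<theta> * s + (1-\<theta>) * a" using e by (simp add: algebra_simps)
  hence "cost i1 w x p \<le> \<theta> * cost i1 w x s + (1-\<theta>) * cost i1 w x a"
    using cost_conv[OF wpos t0] by simp
  also have "\<dots> \<le> \<theta> * cost i1 w x s + (1-\<theta>) * cost i1 w x s"
    using t0 assms(4) by (intro add_left_mono mult_left_mono) auto
  finally show ?thesis by (simp add: algebra_simps)
qed

lemma between2:
  assumes wpos: "\<forall>j. w$j > 0" and "s \<le> p" "p \<le> a" "cost i1 w x a \<le> cost i1 w x s"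
  shows "cost i1 w x p \<le> cost i1 w x s"
proof (cases "a = s")
  case True thus ?thesis using assms by simp
next
  case False
  hence as: "s < a" using assms by simp
  define \<theta> where "\<theta> = (a - p) / (a - s)"
  have t0: "0 \<le> \<theta>" "\<theta> \<le> 1" using assms as by (auto simp: \<theta>_def field_simps)
  have e: "\<theta> * (a - s) = a - p" using as by (simp add: \<theta>_def)
  have "p = \<theta> * s + (1-\<theta>) * a" using e by (simp add: algebra_simps)
  hence "cost i1 w x p \<le> \<theta> * cost i1 w x s + (1-\<theta>) * cost i1 w x a"
    using cost_conv[OF wpos t0] by simp
  also have "\<dots> \<le> \<theta> * cost i1 w x s + (1-\<theta>) * cost i1 w x s"
    using t0 assms(4) by (intro add_left_mono mult_left_mono) auto
  finally show ?thesis by (simp add: algebra_simps)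
qed

lemma cost_min_exists:
  assumes wpos: "\<forall>j. w$j > 0"
  shows "\<exists>t\<ge>m. \<forall>s\<ge>m. cost i1 w x t \<le> cost i1 w x s"
proof -
  define c0 where "c0 = cost i1 w x m"
  have c0: "c0 \<ge> 0" unfolding c0_def cost_def by simp
  define M where "M = max m (x$i1 + sqrt c0)"
  obtain t where t: "t \<in> {m..M}" "\<forall>y\<in>{m..M}. cost i1 w x t \<le> cost i1 w x y"
    using continuous_attains_inf[of "{m..M}" "cost i1 w x"] cost_cont[OF wpos]
    by (auto simp: M_def)
  have "cost i1 w x t \<le> cost i1 w x s" if "s \<ge> m" for s
  proof (cases "s \<le> M")
    case True thus ?thesis using t that by auto
  next
    case False
    hence "s - x$i1 \<ge> sqrt c0" by (auto simp: M_def)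
    hence "(s - x$i1)^2 \<ge> (sqrt c0)^2" using c0 by (intro power_mono) auto
    hence "(x$i1 - s)^2 \<ge> c0" using c0 by (simp add: power2_commute)
    moreover have "cost i1 w x s \<ge> (x$i1 - s)^2" by (rule cost_lower[OF wpos])
    ultimately have "cost i1 w x s \<ge> c0" by linarith
    moreover have "cost i1 w x t \<le> c0" unfolding c0_def using t by (auto simp: M_def)
    ultimately show ?thesis by simp
  qed
  thus ?thesis using t by auto
qed

lemma decomp:
  assumes wpos: "\<forall>j. w$j > 0" and z: "z \<in> Omega1 i1 w"
  shows "norm (x - z)^2 \<ge> cost i1 w x (z$i1) + norm (z - phi i1 w (z$i1) x)^2"
proof -
  define t where "t = z$i1"
  have "(\<Sum>j\<in>UNIV. ((x - phi i1 w t x)$j)^2 + ((z - phi i1 w t x)$j)^2) \<le> (\<Sum>j\<in>UNIV. ((x - z)$j)^2)"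
  proof (rule sum_mono)
    fix j
    show "((x - phi i1 w t x)$j)^2 + ((z - phi i1 w t x)$j)^2 \<le> ((x - z)$j)^2"
    proof (cases "j = i1")
      case True thus ?thesis by (simp add: phi_def t_def)
    next
      case False
      have w1: "w$i1 > 0" and wj: "w$j > 0" using wpos by auto
      have zj: "w$i1 * z$j \<le> w$j * t" using z False unfolding Omega1_def t_def by auto
      define c where "c = (w$j / w$i1) * t"
      have zc: "z$j \<le> c" using zj w1 by (simp add: c_def field_simps)
      show ?thesis
      proof (cases "(w$i1 / w$j) * x$j \<ge> t")
        case True
        have xc: "x$j \<ge> c" using True w1 wj by (simp add: c_def field_simps)
        have ph: "phi i1 w t x $ j = c" using True False by (simp add: phi_def c_def)
        have "(x$j - z$j)^2 = (x$j - c)^2 + (z$j - c)^2 + 2 * (x$j - c) * (c - z$j)"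
          by (simp add: algebra_simps power2_eq_square)
        moreover have "0 \<le> 2 * (x$j - c) * (c - z$j)" using xc zc by simp
        ultimately show ?thesis using ph by simp
      next
        case True': False
        have ph: "phi i1 w t x $ j = x$j" using True' False by (simp add: phi_def)
        show ?thesis using ph by (simp add: power2_commute)
      qed
    qed
  qed
  thus ?thesis unfolding cost_def normsq t_def[symmetric] by (simp add: sum.distrib)
qed

lemma phi_in:
  assumes wpos: "\<forall>j. w$j > 0" and xpos: "\<forall>j. j \<noteq> i1 \<longrightarrow> x$j > 0" and p: "0 \<le> p" "p \<le> 1"
  shows "phi i1 w p x \<in> Omega1 i1 w"
  unfolding Omega1_def
proof (intro CollectI conjI allI impI)
  fix j
  have w1: "w$i1 > 0" and wj: "w$j > 0" using wpos by auto
  show "phi i1 w p x $ j \<ge> 0" using p w1 wj xpos by (auto simp: phi_def)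
  assume j: "j \<noteq> i1"
  show "w$i1 * phi i1 w p x $ j \<le> w$j * phi i1 w p x $ i1"
  proof (cases "(w$i1 / w$j) * x$j \<ge> p")
    case True thus ?thesis using j w1 by (simp add: phi_def)
  next
    case False
    hence "w$i1 * x$j < w$j * p" using wj by (simp add: field_simps)
    thus ?thesis using j False by (simp add: phi_def)
  qed
qed (use p in \<open>auto simp: phi_def\<close>)

theorem mainTheorem4:
  fixes w x :: "real^'n" and i1 :: 'n
  assumes wpos: "\<forall>j. w$j > 0"
    and xpos: "\<forall>j. j \<noteq> i1 \<longrightarrow> x$j > 0"
  shows
   "(\<forall>I. is_interval I \<longrightarrow> I \<subseteq> {x1minus i1 x..} \<longrightarrow>
          breakpoints i1 w x \<inter> interior I = {} \<longrightarrow>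
          smooth_on (interior I) (cost i1 w x) \<and> strongly_convex_on I (cost i1 w x))
    \<and> (\<forall>b\<in>breakpoints i1 w x. (\<exists>\<epsilon>>0. \<forall>t\<in>ball b \<epsilon>. cost i1 w x differentiable (at t))
                                  \<and> isCont (deriv (cost i1 w x)) b)
    \<and> strongly_convex_on {x1minus i1 x..} (cost i1 w x)
    \<and> (\<exists>t\<ge>x1minus i1 x. \<forall>s\<ge>x1minus i1 x. cost i1 w x t \<le> cost i1 w x s)
    \<and> (\<forall>ts. ts \<ge> x1minus i1 x \<and> (\<forall>s\<ge>x1minus i1 x. cost i1 w x ts \<le> cost i1 w x s) \<longrightarrow>
          {z \<in> Omega1 i1 w. \<forall>z'\<in>Omega1 i1 w. norm (x - z) \<le> norm (x - z')} =
          {if ts < x1plus i1 x then phi i1 w (x1plus i1 x) x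
           else if ts \<le> 1 then phi i1 w ts x
           else phi i1 w 1 x})"
proof -
  let ?c = "cost i1 w x"
  have P1: "\<forall>I. is_interval I \<longrightarrow> I \<subseteq> {x1minus i1 x..} \<longrightarrow>
          breakpoints i1 w x \<inter> interior I = {} \<longrightarrow>
          smooth_on (interior I) ?c \<and> strongly_convex_on I ?c"
  proof (intro allI impI conjI)
    fix I :: "real set"
    assume dis: "breakpoints i1 w x \<inter> interior I = {}"
    show "smooth_on (interior I) ?c" unfolding smooth_on_def
    proof (intro allI ballI)
      fix k t assume t: "t \<in> interior I"
      obtain e where e: "e > 0" "ball t e \<subseteq> interior I"
        using open_interior[of I] t by (meson openE)
      have nb: "\<forall>j. j \<noteq> i1 \<longrightarrow> bp i1 w x j \<notin> ball t e"
      proof (intro allI impI notI)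
        fix j assume j: "j \<noteq> i1" and b: "bp i1 w x j \<in> ball t e"
        have "bp i1 w x j \<in> breakpoints i1 w x" using j unfolding breakpoints_def bp_def by blast
        thus False using b e dis by blast
      qed
      show "((deriv ^^ k) ?c) differentiable (at t)"
        using locquad_smooth[OF open_ball cost_locquad[OF wpos nb e(1)]] e(1) by simp
    qed
    show "strongly_convex_on I ?c" by (rule cost_sc[OF wpos])
  qed
  have P2: "\<forall>b\<in>breakpoints i1 w x. (\<exists>\<epsilon>>0. \<forall>t\<in>ball b \<epsilon>. ?c differentiable (at t))
                                  \<and> isCont (deriv ?c) b"
  proof (intro ballI conjI)
    fix b
    show "\<exists>\<epsilon>>0. \<forall>t\<in>ball b \<epsilon>. ?c differentiable (at t)"
      by (rule exI[of _ 1]) (auto simp: real_differentiable_def intro: cost_deriv[OF wpos])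
    show "isCont (deriv ?c) b" unfolding deriv_cost[OF wpos] by (rule Dc_cont)
  qed
  have P5: "\<forall>ts. ts \<ge> x1minus i1 x \<and> (\<forall>s\<ge>x1minus i1 x. ?c ts \<le> ?c s) \<longrightarrow>
          {z \<in> Omega1 i1 w. \<forall>z'\<in>Omega1 i1 w. norm (x - z) \<le> norm (x - z')} =
          {if ts < x1plus i1 x then phi i1 w (x1plus i1 x) x
           else if ts \<le> 1 then phi i1 w ts x
           else phi i1 w 1 x}"
  proof (intro allI impI)
    fix ts assume "ts \<ge> x1minus i1 x \<and> (\<forall>s\<ge>x1minus i1 x. ?c ts \<le> ?c s)"
    hence ts: "ts \<ge> x1minus i1 x" and tsmin: "\<forall>s\<ge>x1minus i1 x. ?c ts \<le> ?c s" by auto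
    define p where "p = (if ts < x1plus i1 x then x1plus i1 x else if ts \<le> 1 then ts else 1)"
    have m0: "x1minus i1 x \<le> 0" by (simp add: x1minus_def)
    have tsx: "ts \<ge> x$i1"
    proof (rule ccontr)
      assume "\<not> ts \<ge> x$i1"
      hence lt: "ts < x$i1" by simp
      have x0: "x$i1 > 0"
      proof (rule ccontr)
        assume "\<not> x$i1 > 0"
        hence "x1minus i1 x = x$i1" by (simp add: x1minus_def)
        thus False using ts lt by simp
      qed
      hence "x1minus i1 x \<le> x$i1" by (simp add: x1minus_def)
      hence "?c ts \<le> ?c (x$i1)" using tsmin by simp
      moreover have "?c ts \<ge> ?c (x$i1) + (x$i1 - ts)^2 - (x$i1 - x$i1)^2"
        by (rule cost_mono_part[OF wpos]) (use lt in simp)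
      moreover have "(x$i1 - ts)^2 > 0" using lt by simp
      ultimately show False by simp
    qed
    have p01: "0 \<le> p" "p \<le> 1" by (auto simp: p_def x1plus_def)
    have pmin: "\<forall>s\<in>{0..1}. ?c p \<le> ?c s"
    proof
      fix s :: real assume s: "s \<in> {0..1}"
      have cs: "?c ts \<le> ?c s" using tsmin s m0 by auto
      consider (a) "ts < x1plus i1 x" | (b) "\<not> ts < x1plus i1 x" "ts \<le> 1" | (c) "\<not> ts < x1plus i1 x" "\<not> ts \<le> 1" by blast
      thus "?c p \<le> ?c s"
      proof cases
        case a
        have "x1plus i1 x = 0" using a tsx by (auto simp: x1plus_def)
        hence "p = 0" "ts < 0" using a by (auto simp: p_def)
        thus ?thesis using between1[OF wpos _ _ cs] s by auto
      next
        case b thus ?thesis using cs by (simp add: p_def)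
      next
        case c
        hence "p = 1" by (simp add: p_def)
        thus ?thesis using between2[OF wpos _ _ cs] s c by auto
      qed
    qed
    have uniq: "t = p" if t: "t \<in> {0..1}" "?c t \<le> ?c p" for t
    proof -
      have "?c ((1/2) * t + (1 - 1/2) * p) \<le> (1/2) * ?c t + (1 - 1/2) * ?c p - 2/2 * (1/2) * (1 - 1/2) * (t - p)^2"
        by (rule cost_strong[OF wpos]) auto
      moreover have "(1/2) * t + (1 - 1/2) * p \<in> {0..1}" using t p01 by auto
      hence "?c p \<le> ?c ((1/2) * t + (1 - 1/2) * p)" using pmin by blast
      moreover have "2/2 * (1/2) * (1 - 1/2) * (t - p)^2 = (t - p)^2 / 4" by simp
      moreover have "(1 - 1/2) * ?c p = ?c p / 2" by simp
      ultimately have "(t - p)^2 \<le> 0" using t(2) by linarith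
      thus ?thesis by simp
    qed
    define P where "P = phi i1 w p x"
    have PO: "P \<in> Omega1 i1 w" unfolding P_def by (rule phi_in[OF wpos xpos p01])
    have Pn: "norm (x - P)^2 = ?c p" by (simp add: cost_def P_def)
    have z01: "z$i1 \<in> {0..1}" if "z \<in> Omega1 i1 w" for z using that by (auto simp: Omega1_def)
    have low: "norm (x - P)^2 \<le> norm (x - z)^2" if z: "z \<in> Omega1 i1 w" for z
    proof -
      have "?c (z$i1) + norm (z - phi i1 w (z$i1) x)^2 \<le> norm (x - z)^2" by (rule decomp[OF wpos z])
      moreover have "?c p \<le> ?c (z$i1)" using pmin z01[OF z] by blast
      moreover have "norm (z - phi i1 w (z$i1) x)^2 \<ge> 0" by simp
      ultimately show ?thesis using Pn by linarith
    qed
    have "{z \<in> Omega1 i1 w. \<forall>z'\<in>Omega1 i1 w. norm (x - z) \<le> norm (x - z')} = {P}"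
    proof (intro equalityI subsetI)
      fix z assume "z \<in> {z \<in> Omega1 i1 w. \<forall>z'\<in>Omega1 i1 w. norm (x - z) \<le> norm (x - z')}"
      hence z: "z \<in> Omega1 i1 w" and zle: "norm (x - z) \<le> norm (x - P)" using PO by auto
      have "norm (x - z)^2 \<le> norm (x - P)^2" using zle by (simp add: power_mono)
      moreover have "?c (z$i1) + norm (z - phi i1 w (z$i1) x)^2 \<le> norm (x - z)^2" by (rule decomp[OF wpos z])
      moreover have "?c p \<le> ?c (z$i1)" using pmin z01[OF z] by blast
      moreover have "norm (z - phi i1 w (z$i1) x)^2 \<ge> 0" by simp
      ultimately have a: "norm (z - phi i1 w (z$i1) x)^2 \<le> 0" and b: "?c (z$i1) \<le> ?c p" using Pn by linarith+
      from a have "z = phi i1 w (z$i1) x" by simp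
      moreover have "z$i1 = p" using uniq[OF z01[OF z] b] .
      ultimately show "z \<in> {P}" by (simp add: P_def)
    next
      fix z assume "z \<in> {P}"
      hence zP: "z = P" by simp
      have "\<forall>z'\<in>Omega1 i1 w. norm (x - P) \<le> norm (x - z')"
        using low by (auto intro: power2_le_imp_le)
      thus "z \<in> {z \<in> Omega1 i1 w. \<forall>z'\<in>Omega1 i1 w. norm (x - z) \<le> norm (x - z')}" using zP PO by simp
    qed
    thus "{z \<in> Omega1 i1 w. \<forall>z'\<in>Omega1 i1 w. norm (x - z) \<le> norm (x - z')} =
          {if ts < x1plus i1 x then phi i1 w (x1plus i1 x) x
           else if ts \<le> 1 then phi i1 w ts x
           else phi i1 w 1 x}" by (simp add: P_def p_def)
  qed
  show ?thesis using P1 P2 P5 cost_sc[OF wpos] cost_min_exists[OF wpos] by blast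
qed

end
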